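(* Let $\mathbb{D}$ be a domain, and let $\mathbb{D}_1, \mathbb{D}_2 \subseteq \mathbb{D}$ be disjoint. For a data set $D$ write $D_1 = D \cap \mathbb{D}_1$ and $D_2 = D \cap \mathbb{D}_2$. Let $M_1$ be an $f_1$-differentially private mechanism and $M_2$ an $f_2$-differentially private mechanism, where $M_2$ takes as input an auxiliary value $y_1$ (an output of $M_1$) together with a data set, and is $f_2$-differentially private in its data argument for every value of $y_1$. Define the joint mechanism $M(D) := (y_1, M_2(y_1, D_2))$ where $y_1 := M_1(D_1)$. Then $M$ is $\mathrm{lce}\{f_1, f_2\}$-differentially private.
   Context: An attribute is a finite set; a domain is $\mathbb{D} = A_1 \times \cdots \times A_m$ for attributes $A_i$; elements of $\mathbb{D}$ are rows. A data set is an element of $\mathbb{N}^{|\mathbb{D}|}$ (a histogram/multiset of rows); for $\mathbb{D}' \subseteq \mathbb{D}$, $D \cap \mathbb{D}'$ is the data set consisting of the rows of $D$ lying in $\mathbb{D}'$. Two data sets are neighboring ($D \sim D'$) if they differ in a single row. For distributions $P,P'$ on the same space, the trade-off function is $T(P,P')(\alpha) := \inf\{\beta_\phi : \alpha_\phi \le \alpha\}$ over measurable rejection rules $0\le\phi\le 1$, with $\alpha_\phi = \mathbb{E}_P[\phi]$, $\beta_\phi = 1-\mathbb{E}_{P'}[\phi]$; a trade-off function is any function of this form. For a trade-off function $f$, a mechanism $M$ is $f$-differentially private if $T(M(D), M(D')) \ge f$ pointwise on $[0,1]$ for all neighboring $D, D'$ (where $M(D)$ denotes the output distribution). The lower convex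 envelope is $\mathrm{lce}\{f_1,f_2\}(x) := \sup\{f(x) : f \text{ convex}, f \le \min\{f_1,f_2\}\}$. *)

theory Defs
  imports "HOL-Probability.Probability"
begin

text \<open>Data sets over a finite domain of rows 'r: histograms 'r => nat.\<close>
type_synonym 'r dataset = "'r \<Rightarrow> nat"

definition restrict_ds :: "'r dataset \<Rightarrow> 'r set \<Rightarrow> 'r dataset" where
  "restrict_ds D S = (\<lambda>x. if x \<in> S then D x else 0)"

definition neighbors :: "'r dataset \<Rightarrow> 'r dataset \<Rightarrow> bool" where
  "neighbors D D' \<longleftrightarrow> (\<exists>x. D' = D(x := D x + 1) \<or> D = D'(x := D' x + 1))"

definition tradeoff :: "'a measure \<Rightarrow> 'a measure \<Rightarrow> real \<Rightarrow> real" where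
  "tradeoff P P' \<alpha> = Inf {1 - (\<integral>x. \<phi> x \<partial>P') | \<phi>.
      \<phi> \<in> borel_measurable P \<and> (\<forall>x\<in>space P. 0 \<le> \<phi> x \<and> \<phi> x \<le> 1) \<and> (\<integral>x. \<phi> x \<partial>P) \<le> \<alpha>}"

definition is_tradeoff_fun :: "(real \<Rightarrow> real) \<Rightarrow> bool" where
  "is_tradeoff_fun f \<longleftrightarrow> (\<exists>P P' :: real measure. prob_space P \<and> prob_space P' \<and>
      sets P = sets P' \<and> (\<forall>\<alpha>\<in>{0..1}. f \<alpha> = tradeoff P P' \<alpha>))"

definition f_dp :: "(real \<Rightarrow> real) \<Rightarrow> 'b measure \<Rightarrow> ('r dataset \<Rightarrow> 'b measure) \<Rightarrow> bool" where
  "f_dp f Y M \<longleftrightarrow> (\<forall>D. M D \<in> space (prob_algebra Y)) \<and>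
     (\<forall>D D'. neighbors D D' \<longrightarrow> (\<forall>\<alpha>\<in>{0..1}. f \<alpha> \<le> tradeoff (M D) (M D') \<alpha>))"

definition lce :: "(real \<Rightarrow> real) \<Rightarrow> (real \<Rightarrow> real) \<Rightarrow> real \<Rightarrow> real" where
  "lce f1 f2 x = Sup {h x | h. convex_on {0..1} h \<and> (\<forall>t\<in>{0..1}. h t \<le> min (f1 t) (f2 t))}"

definition joint_mech ::
  "'a measure \<Rightarrow> 'b measure \<Rightarrow> ('r dataset \<Rightarrow> 'a measure) \<Rightarrow> ('a \<Rightarrow> 'r dataset \<Rightarrow> 'b measure)
   \<Rightarrow> 'r set \<Rightarrow> 'r set \<Rightarrow> 'r dataset \<Rightarrow> ('a \<times> 'b) measure" where
  "joint_mech Y1 Y2 M1 M2 S1 S2 D =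
     M1 (restrict_ds D S1) \<bind>
       (\<lambda>y. distr (M2 y (restrict_ds D S2)) (Y1 \<Otimes>\<^sub>M Y2) (\<lambda>z. (y, z)))"

end

theory Submission imports Defs begin

definition tst :: "'a measure \<Rightarrow> ('a \<Rightarrow> real) \<Rightarrow> bool" where
  "tst P \<phi> \<longleftrightarrow> \<phi> \<in> borel_measurable P \<and> (\<forall>x\<in>space P. 0 \<le> \<phi> x \<and> \<phi> x \<le> 1)"

lemma tradeoff_alt: "tradeoff P P' \<alpha> = Inf {1 - (\<integral>x. \<phi> x \<partial>P') | \<phi>. tst P \<phi> \<and> (\<integral>x. \<phi> x \<partial>P) \<le> \<alpha>}"
  unfolding tradeoff_def tst_def by simp

lemma tst_cong: "sets P = sets P' \<Longrightarrow> tst P \<phi> = tst P' \<phi>"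
  unfolding tst_def using sets_eq_imp_space_eq measurable_cong_sets by metis

lemma tst_int:
  assumes "prob_space P" "tst P \<phi>"
  shows "integrable P \<phi>" "0 \<le> (\<integral>x. \<phi> x \<partial>P)" "(\<integral>x. \<phi> x \<partial>P) \<le> 1"
proof -
  interpret prob_space P by fact
  show i: "integrable P \<phi>"
    using assms(2) unfolding tst_def by (intro integrable_const_bound[where B=1]) auto
  show "0 \<le> (\<integral>x. \<phi> x \<partial>P)" using assms(2) unfolding tst_def by (intro integral_nonneg_AE AE_I2) auto
  have "(\<integral>x. \<phi> x \<partial>P) \<le> (\<integral>x. 1 \<partial>P)"
    using assms(2) i unfolding tst_def by (intro integral_mono) auto
  then show "(\<integral>x. \<phi> x \<partial>P) \<le> 1" by (simp add: prob_space)
qed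

locale tpair =
  fixes P P' :: "'a measure"
  assumes P: "prob_space P" and P': "prob_space P'" and S: "sets P = sets P'"
begin

abbreviation "TS \<alpha> \<equiv> {1 - (\<integral>x. \<phi> x \<partial>P') | \<phi>. tst P \<phi> \<and> (\<integral>x. \<phi> x \<partial>P) \<le> \<alpha>}"

lemma TS_nonempty: "0 \<le> \<alpha> \<Longrightarrow> TS \<alpha> \<noteq> {}"
  by (rule ccontr) (auto simp: tst_def dest: spec[where x="\<lambda>_. 0"])

lemma TS_ge0: "b \<in> TS \<alpha> \<Longrightarrow> 0 \<le> b"
  using tst_int(3)[OF P'] tst_cong[OF S] by auto

lemma TS_bdd: "bdd_below (TS \<alpha>)"
  using TS_ge0 by (meson bdd_below.I)

lemma T_le: "tst P \<phi> \<Longrightarrow> (\<integral>x. \<phi> x \<partial>P) \<le> \<alpha> \<Longrightarrow> tradeoff P P' \<alpha> \<le> 1 - (\<integral>x. \<phi> x \<partial>P')"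
  unfolding tradeoff_alt by (rule cInf_lower[OF _ TS_bdd]) auto

lemma T_ge: "0 \<le> \<alpha> \<Longrightarrow> (\<And>\<phi>. tst P \<phi> \<Longrightarrow> (\<integral>x. \<phi> x \<partial>P) \<le> \<alpha> \<Longrightarrow> c \<le> 1 - (\<integral>x. \<phi> x \<partial>P'))
   \<Longrightarrow> c \<le> tradeoff P P' \<alpha>"
  unfolding tradeoff_alt by (rule cInf_greatest[OF TS_nonempty]) auto

lemma T_nonneg: "0 \<le> \<alpha> \<Longrightarrow> 0 \<le> tradeoff P P' \<alpha>"
  unfolding tradeoff_alt by (rule cInf_greatest[OF TS_nonempty]) (auto intro: TS_ge0)

lemma T_mono: "0 \<le> \<alpha> \<Longrightarrow> \<alpha> \<le> \<alpha>' \<Longrightarrow> tradeoff P P' \<alpha>' \<le> tradeoff P P' \<alpha>"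
  unfolding tradeoff_alt by (rule cInf_superset_mono[OF TS_nonempty TS_bdd]) auto

lemma T_near: assumes "0 \<le> \<alpha>" "0 < e"
  obtains \<phi> where "tst P \<phi>" "(\<integral>x. \<phi> x \<partial>P) \<le> \<alpha>" "1 - (\<integral>x. \<phi> x \<partial>P') < tradeoff P P' \<alpha> + e"
proof -
  have "Inf (TS \<alpha>) < tradeoff P P' \<alpha> + e" using assms unfolding tradeoff_alt by simp
  from cInf_lessD[OF TS_nonempty[OF assms(1)] this] that show ?thesis by blast
qed

lemma T_convex: "convex_on {0..1} (tradeoff P P')"
  unfolding convex_on_def
proof (intro conjI ballI allI impI convex_real_interval)
  fix a1 a2 :: real and u v :: real
  assume a: "a1 \<in> {0..1}" "a2 \<in> {0..1}" and uv: "0 \<le> u" "0 \<le> v" "u + v = 1"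
  show "tradeoff P P' (u *\<^sub>R a1 + v *\<^sub>R a2) \<le> u * tradeoff P P' a1 + v * tradeoff P P' a2"
  proof (rule field_le_epsilon)
    fix e :: real assume e: "0 < e"
    obtain \<phi>1 where p1: "tst P \<phi>1" "(\<integral>x. \<phi>1 x \<partial>P) \<le> a1" "1 - (\<integral>x. \<phi>1 x \<partial>P') < tradeoff P P' a1 + e"
      using T_near[of a1 e] a e by auto
    obtain \<phi>2 where p2: "tst P \<phi>2" "(\<integral>x. \<phi>2 x \<partial>P) \<le> a2" "1 - (\<integral>x. \<phi>2 x \<partial>P') < tradeoff P P' a2 + e"
      using T_near[of a2 e] a e by auto
    define \<phi> where "\<phi> = (\<lambda>x. u * \<phi>1 x + v * \<phi>2 x)"
    have t: "tst P \<phi>"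
      using p1(1) p2(1) uv unfolding tst_def \<phi>_def
      by (auto intro!: add_nonneg_nonneg mult_nonneg_nonneg)
         (smt (verit, best) mult_left_le)
    have i1: "integrable P \<phi>1" "integrable P \<phi>2" using tst_int(1)[OF P] p1 p2 by auto
    have i1': "integrable P' \<phi>1" "integrable P' \<phi>2" using tst_int(1)[OF P'] p1 p2 tst_cong[OF S] by auto
    have "(\<integral>x. \<phi> x \<partial>P) = u * (\<integral>x. \<phi>1 x \<partial>P) + v * (\<integral>x. \<phi>2 x \<partial>P)"
      unfolding \<phi>_def using i1 by simp
    also have "\<dots> \<le> u * a1 + v * a2" using p1 p2 uv by (intro add_mono mult_left_mono) auto
    finally have "tradeoff P P' (u *\<^sub>R a1 + v *\<^sub>R a2) \<le> 1 - (\<integral>x. \<phi> x \<partial>P')"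
      using T_le[OF t] by simp
    also have "(\<integral>x. \<phi> x \<partial>P') = u * (\<integral>x. \<phi>1 x \<partial>P') + v * (\<integral>x. \<phi>2 x \<partial>P')"
      unfolding \<phi>_def using i1' by simp
    also have "1 - \<dots> = u * (1 - (\<integral>x. \<phi>1 x \<partial>P')) + v * (1 - (\<integral>x. \<phi>2 x \<partial>P'))"
      using uv by (simp add: algebra_simps)
    also have "\<dots> \<le> u * (tradeoff P P' a1 + e) + v * (tradeoff P P' a2 + e)"
      using p1 p2 uv by (intro add_mono mult_left_mono) auto
    also have "\<dots> = u * tradeoff P P' a1 + v * tradeoff P P' a2 + e * (u + v)"
      by (simp add: algebra_simps)
    also have "\<dots> = u * tradeoff P P' a1 + v * tradeoff P P' a2 + e"
      using uv by simp
    finally show "tradeoff P P' (u *\<^sub>R a1 + v *\<^sub>R a2) \<le> u * tradeoff P P' a1 + v * tradeoff P P' a2 + e" .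
  qed
qed

end


lemma jensen01:
  fixes f :: "real \<Rightarrow> real"
  assumes M: "prob_space M" and t: "tst M \<psi>" and g: "integrable M g"
    and le: "\<And>y. y \<in> space M \<Longrightarrow> f (\<psi> y) \<le> g y" and cv: "convex_on {0..1} f"
  shows "f (\<integral>y. \<psi> y \<partial>M) \<le> (\<integral>y. g y \<partial>M)"
proof -
  interpret prob_space M by fact
  note ti = tst_int[OF M t]
  have pm: "\<psi> \<in> borel_measurable M" and pb: "\<And>y. y \<in> space M \<Longrightarrow> 0 \<le> \<psi> y \<and> \<psi> y \<le> 1"
    using t unfolding tst_def by auto
  define a where "a = (\<integral>y. \<psi> y \<partial>M)"
  consider "a = 0" | "a = 1" | "0 < a \<and> a < 1" using ti unfolding a_def by linarith
  then show ?thesis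
  proof cases
    case 1
    then have "AE y in M. \<psi> y = 0"
      using integral_nonneg_eq_0_iff_AE[OF ti(1)] pb unfolding a_def by (auto intro: AE_I2)
    then have "AE y in M. f a \<le> g y" using AE_space
    proof eventually_elim
      case (elim y) then show ?case using le[of y] 1 by auto
    qed
    then have "(\<integral>y. f a \<partial>M) \<le> (\<integral>y. g y \<partial>M)" by (intro integral_mono_AE g) auto
    then show ?thesis by (simp add: prob_space a_def)
  next
    case 2
    have i: "integrable M (\<lambda>y. 1 - \<psi> y)" using ti by auto
    have "(\<integral>y. 1 - \<psi> y \<partial>M) = 0" using ti 2 unfolding a_def by (simp add: prob_space)
    then have "AE y in M. 1 - \<psi> y = 0"
      using integral_nonneg_eq_0_iff_AE[OF i] pb by (auto intro: AE_I2)
    then have "AE y in M. f a \<le> g y" using AE_space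
    proof eventually_elim
      case (elim y) then show ?case using le[of y] 2 by auto
    qed
    then have "(\<integral>y. f a \<partial>M) \<le> (\<integral>y. g y \<partial>M)" by (intro integral_mono_AE g) auto
    then show ?thesis by (simp add: prob_space a_def)
  next
    case 3
    define c where "c = Inf ((\<lambda>t. (f a - f t) / (a - t)) ` ({a<..} \<inter> {0..1}))"
    have sup: "f a + c * (t - a) \<le> f t" if "t \<in> {0..1}" for t
      unfolding c_def using convex_le_Inf_differential[OF cv _ that, of a] 3
      by (simp add: interior_atLeastAtMost_real)
    have "(\<integral>y. f a + c * (\<psi> y - a) \<partial>M) \<le> (\<integral>y. g y \<partial>M)"
    proof (intro integral_mono g)
      show "integrable M (\<lambda>y. f a + c * (\<psi> y - a))" using ti by auto
      fix y assume "y \<in> space M"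
      then show "f a + c * (\<psi> y - a) \<le> g y" using sup[of "\<psi> y"] pb le[of y] by auto
    qed
    also have "(\<integral>y. f a + c * (\<psi> y - a) \<partial>M) = f a + c * (a - a)"
      using ti unfolding a_def by (simp add: prob_space)
    finally show ?thesis by (simp add: a_def)
  qed
qed


lemma bind_facts:
  fixes Y1 :: "'a measure" and Y2 :: "'b measure"
  assumes P: "P \<in> space (prob_algebra Y1)" and Q: "Q \<in> Y1 \<rightarrow>\<^sub>M prob_algebra Y2"
  defines "K \<equiv> (\<lambda>y. distr (Q y) (Y1 \<Otimes>\<^sub>M Y2) (\<lambda>z. (y, z)))"
  shows K: "K \<in> Y1 \<rightarrow>\<^sub>M prob_algebra (Y1 \<Otimes>\<^sub>M Y2)"
    and J: "P \<bind> K \<in> space (prob_algebra (Y1 \<Otimes>\<^sub>M Y2))"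
    and Ki: "\<And>(\<phi>::_ \<Rightarrow> real) y. \<phi> \<in> borel_measurable (Y1 \<Otimes>\<^sub>M Y2) \<Longrightarrow> y \<in> space Y1 \<Longrightarrow>
          integral\<^sup>L (K y) \<phi> = (\<integral>z. \<phi> (y, z) \<partial>Q y)"
    and Km: "\<And>(\<phi>::_ \<Rightarrow> real). \<phi> \<in> borel_measurable (Y1 \<Otimes>\<^sub>M Y2) \<Longrightarrow>
          (\<lambda>y. \<integral>z. \<phi> (y, z) \<partial>Q y) \<in> borel_measurable Y1"
    and Ji: "\<And>(\<phi>::_ \<Rightarrow> real). \<phi> \<in> borel_measurable (Y1 \<Otimes>\<^sub>M Y2) \<Longrightarrow> (\<And>x. x \<in> space (Y1 \<Otimes>\<^sub>M Y2) \<Longrightarrow> \<bar>\<phi> x\<bar> \<le> 1) \<Longrightarrow>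
          integral\<^sup>L (P \<bind> K) \<phi> = (\<integral>y. (\<integral>z. \<phi> (y, z) \<partial>Q y) \<partial>P)"
proof -
  show K: "K \<in> Y1 \<rightarrow>\<^sub>M prob_algebra (Y1 \<Otimes>\<^sub>M Y2)"
    unfolding K_def by (rule measurable_distr_prob_space2[OF Q]) simp
  show "P \<bind> K \<in> space (prob_algebra (Y1 \<Otimes>\<^sub>M Y2))"
    using prob_space_bind'[OF P K] sets_bind'[OF P K] by (simp add: space_prob_algebra)
  have Qs: "sets (Q y) = sets Y2" "prob_space (Q y)" if "y \<in> space Y1" for y
    using measurable_space[OF Q that] by (auto simp: space_prob_algebra)
  show Ki: "integral\<^sup>L (K y) \<phi> = (\<integral>z. \<phi> (y, z) \<partial>Q y)"
    if "\<phi> \<in> borel_measurable (Y1 \<Otimes>\<^sub>M Y2)" "y \<in> space Y1" for y and \<phi> :: "_ \<Rightarrow> real"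
  proof -
    have "(\<lambda>z. (y, z)) \<in> Q y \<rightarrow>\<^sub>M Y1 \<Otimes>\<^sub>M Y2"
      using Qs(1)[OF that(2)] that(2) by (simp cong: measurable_cong_sets)
    from integral_distr[OF this that(1)] show ?thesis unfolding K_def by simp
  qed
  show Km: "(\<lambda>y. \<integral>z. \<phi> (y, z) \<partial>Q y) \<in> borel_measurable Y1"
    if "\<phi> \<in> borel_measurable (Y1 \<Otimes>\<^sub>M Y2)" for \<phi> :: "_ \<Rightarrow> real"
  proof -
    have "(\<lambda>y. integral\<^sup>L (K y) \<phi>) \<in> borel_measurable Y1"
      by (rule measurable_compose[OF measurable_prob_algebraD[OF K] integral_measurable_subprob_algebra[OF that]])
    then show ?thesis by (rule measurable_cong[THEN iffD1, rotated]) (simp add: Ki[OF that])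
  qed
  show "integral\<^sup>L (P \<bind> K) \<phi> = (\<integral>y. (\<integral>z. \<phi> (y, z) \<partial>Q y) \<partial>P)"
    if "\<phi> \<in> borel_measurable (Y1 \<Otimes>\<^sub>M Y2)" "\<And>x. x \<in> space (Y1 \<Otimes>\<^sub>M Y2) \<Longrightarrow> \<bar>\<phi> x\<bar> \<le> 1" for \<phi> :: "_ \<Rightarrow> real"
  proof -
    have Pp: "prob_space P" "sets P = sets Y1" using P by (auto simp: space_prob_algebra)
    have "integral\<^sup>L (P \<bind> K) \<phi> = (\<integral>y. integral\<^sup>L (K y) \<phi> \<partial>P)"
    proof (rule integral_bind[where K="Y1 \<Otimes>\<^sub>M Y2" and B=1 and B'=1])
      show "\<phi> \<in> borel_measurable (Y1 \<Otimes>\<^sub>M Y2)" by fact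
      show "\<And>x. x \<in> space (Y1 \<Otimes>\<^sub>M Y2) \<Longrightarrow> \<bar>\<phi> x\<bar> \<le> 1" by fact
      show "K \<in> P \<rightarrow>\<^sub>M subprob_algebra (Y1 \<Otimes>\<^sub>M Y2)"
        using measurable_prob_algebraD[OF K] Pp(2) by (simp cong: measurable_cong_sets)
      show "finite_measure P" using Pp(1) by (simp add: prob_space.finite_measure)
      show "AE x in P. emeasure (K x) (space (K x)) \<le> ennreal 1"
        using measurable_space[OF K] sets_eq_imp_space_eq[OF Pp(2)]
        by (intro AE_I2) (auto simp: space_prob_algebra prob_space.emeasure_space_1)
    qed
    also have "\<dots> = (\<integral>y. (\<integral>z. \<phi> (y, z) \<partial>Q y) \<partial>P)"
      using Ki[OF that(1)] sets_eq_imp_space_eq[OF Pp(2)] by (intro Bochner_Integration.integral_cong) auto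
    finally show ?thesis .
  qed
qed


lemma sec_tst:
  fixes \<phi> :: "'a \<times> 'b \<Rightarrow> real"
  assumes "y \<in> space Y1" "sets Q = sets Y2" "\<phi> \<in> borel_measurable (Y1 \<Otimes>\<^sub>M Y2)"
    "\<forall>x\<in>space (Y1 \<Otimes>\<^sub>M Y2). 0 \<le> \<phi> x \<and> \<phi> x \<le> 1"
  shows "tst Q (\<lambda>z. \<phi> (y, z))"
  unfolding tst_def
proof
  have "(\<lambda>z. \<phi> (y, z)) \<in> borel_measurable Y2" using measurable_compose[OF measurable_Pair1'[OF assms(1)] assms(3)] by simp
  then show "(\<lambda>z. \<phi> (y, z)) \<in> borel_measurable Q" using assms(2) by (simp cong: measurable_cong_sets)
  show "\<forall>x\<in>space Q. 0 \<le> \<phi> (y, x) \<and> \<phi> (y, x) \<le> 1"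
    using assms(1,4) sets_eq_imp_space_eq[OF assms(2)] by (auto simp: space_pair_measure)
qed

lemma tf_props:
  assumes "is_tradeoff_fun f"
  shows "convex_on {0..1} f" "\<And>a. a \<in> {0..1} \<Longrightarrow> 0 \<le> f a"
    "\<And>a b. 0 \<le> a \<Longrightarrow> a \<le> b \<Longrightarrow> b \<le> 1 \<Longrightarrow> f b \<le> f a"
    "\<And>a. a \<in> {0..1} \<Longrightarrow> f a \<le> 1 - a"
proof -
  obtain P P' :: "real measure" where pp: "prob_space P" "prob_space P'" "sets P = sets P'"
    and eq: "\<And>a. a \<in> {0..1} \<Longrightarrow> f a = tradeoff P P' a"
    using assms unfolding is_tradeoff_fun_def by blast
  interpret tpair P P' by (rule tpair.intro) (use pp in auto)
  show "convex_on {0..1} f"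
    using T_convex unfolding convex_on_def
  proof (intro conjI ballI allI impI)
    fix x y u v :: real assume c: "convex {0..1::real} \<and> (\<forall>x\<in>{0..1}. \<forall>y\<in>{0..1}. \<forall>u\<ge>0. \<forall>v\<ge>0. u + v = 1 \<longrightarrow>
        tradeoff P P' (u *\<^sub>R x + v *\<^sub>R y) \<le> u * tradeoff P P' x + v * tradeoff P P' y)"
      and xy: "x \<in> {0..1}" "y \<in> {0..1}" and uv: "0 \<le> u" "0 \<le> v" "u + v = 1"
    have m: "u *\<^sub>R x + v *\<^sub>R y \<in> {0..1}"
      using c xy uv unfolding convex_def by blast
    show "f (u *\<^sub>R x + v *\<^sub>R y) \<le> u * f x + v * f y"
      using c xy uv eq[OF m] eq[OF xy(1)] eq[OF xy(2)] by simp
  qed (simp add: convex_real_interval)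
  show "\<And>a. a \<in> {0..1} \<Longrightarrow> 0 \<le> f a" using eq T_nonneg by auto
  show "\<And>a b. 0 \<le> a \<Longrightarrow> a \<le> b \<Longrightarrow> b \<le> 1 \<Longrightarrow> f b \<le> f a" using eq T_mono by auto
  show "f a \<le> 1 - a" if a: "a \<in> {0..1}" for a
  proof -
    have t: "tst P (\<lambda>_. a)" using a by (auto simp: tst_def)
    have "tradeoff P P' a \<le> 1 - (\<integral>x. a \<partial>P')"
      by (rule T_le[OF t]) (simp add: prob_space.prob_space[OF pp(1)])
    then show ?thesis using eq[OF a] by (simp add: prob_space.prob_space[OF pp(2)])
  qed
qed

lemma lce_le:
  assumes "is_tradeoff_fun f1" "is_tradeoff_fun f2" "a \<in> {0..1}"
  shows "lce f1 f2 a \<le> f1 a" "lce f1 f2 a \<le> f2 a"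
proof -
  have "lce f1 f2 a \<le> min (f1 a) (f2 a)"
    unfolding lce_def
  proof (rule cSup_least)
    have "convex_on {0..1} (\<lambda>_::real. 0::real)" by (simp add: convex_on_const convex_real_interval)
    moreover have "\<forall>t\<in>{0..1}. (0::real) \<le> min (f1 t) (f2 t)"
      using tf_props(2)[OF assms(1)] tf_props(2)[OF assms(2)] by auto
    ultimately show "{h a |h. convex_on {0..1} h \<and> (\<forall>t\<in>{0..1}. h t \<le> min (f1 t) (f2 t))} \<noteq> {}"
      by blast
  qed (use assms(3) in auto)
  then show "lce f1 f2 a \<le> f1 a" "lce f1 f2 a \<le> f2 a" by auto
qed

lemma restrict_nb:
  assumes "neighbors D D'"
  obtains x where "\<And>S. x \<notin> S \<Longrightarrow> restrict_ds D S = restrict_ds D' S"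
    "\<And>S. x \<in> S \<Longrightarrow> neighbors (restrict_ds D S) (restrict_ds D' S)"
proof -
  obtain x where x: "D' = D(x := D x + 1) \<or> D = D'(x := D' x + 1)"
    using assms unfolding neighbors_def by blast
  show ?thesis
  proof (rule that[of x])
    fix S assume "x \<notin> S" then show "restrict_ds D S = restrict_ds D' S"
      using x unfolding restrict_ds_def by (auto simp: fun_eq_iff)
  next
    fix S assume "x \<in> S" then show "neighbors (restrict_ds D S) (restrict_ds D' S)"
      using x unfolding restrict_ds_def neighbors_def
      by (intro exI[of _ x]) (auto simp: fun_eq_iff)
  qed
qed


theorem theorem5:
  fixes Y1 :: "'a measure" and Y2 :: "'b measure"
    and M1 :: "('r::finite) dataset \<Rightarrow> 'a measure"
    and M2 :: "'a \<Rightarrow> 'r dataset \<Rightarrow> 'b measure"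
    and S1 S2 :: "'r set" and f1 f2 :: "real \<Rightarrow> real"
  assumes "S1 \<inter> S2 = {}"
    and "is_tradeoff_fun f1" and "is_tradeoff_fun f2"
    and "f_dp f1 Y1 M1"
    and "\<And>D. (\<lambda>y. M2 y D) \<in> measurable Y1 (prob_algebra Y2)"
    and "\<And>y. y \<in> space Y1 \<Longrightarrow> f_dp f2 Y2 (M2 y)"
  shows "f_dp (lce f1 f2) (Y1 \<Otimes>\<^sub>M Y2) (joint_mech Y1 Y2 M1 M2 S1 S2)"
proof -
  note disj = assms(1) and tf1 = assms(2) and tf2 = assms(3)
  have M1s: "M1 D \<in> space (prob_algebra Y1)" for D using assms(4) unfolding f_dp_def by blast
  have M1dp: "\<And>\<alpha>. neighbors D D' \<Longrightarrow> \<alpha> \<in> {0..1} \<Longrightarrow> f1 \<alpha> \<le> tradeoff (M1 D) (M1 D') \<alpha>" for D D'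
    using assms(4) unfolding f_dp_def by blast
  have M2s: "M2 y D \<in> space (prob_algebra Y2)" if "y \<in> space Y1" for y D
    using assms(6)[OF that] unfolding f_dp_def by blast
  have M2dp: "\<And>\<alpha>. y \<in> space Y1 \<Longrightarrow> neighbors D D' \<Longrightarrow> \<alpha> \<in> {0..1} \<Longrightarrow> f2 \<alpha> \<le> tradeoff (M2 y D) (M2 y D') \<alpha>" for y D D'
    using assms(6) unfolding f_dp_def by blast
  define J where "J = joint_mech Y1 Y2 M1 M2 S1 S2"
  define P where "P D = M1 (restrict_ds D S1)" for D
  define Q where "Q D y = M2 y (restrict_ds D S2)" for D y
  have Qm: "Q D \<in> Y1 \<rightarrow>\<^sub>M prob_algebra Y2" for D unfolding Q_def by (rule assms(5))
  have Jeq: "J D = P D \<bind> (\<lambda>y. distr (Q D y) (Y1 \<Otimes>\<^sub>M Y2) (\<lambda>z. (y, z)))" for D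
    unfolding J_def joint_mech_def P_def Q_def ..
  note bf = bind_facts[OF M1s Qm, folded P_def Jeq]
  have Js: "J D \<in> space (prob_algebra (Y1 \<Otimes>\<^sub>M Y2))" for D
    using bind_facts(2)[OF M1s Qm] unfolding Jeq P_def .
  have Jsets: "sets (J D) = sets (Y1 \<Otimes>\<^sub>M Y2)" "prob_space (J D)" for D
    using Js by (auto simp: space_prob_algebra)
  have Ps: "sets (P D) = sets Y1" "prob_space (P D)" for D
    using M1s unfolding P_def by (auto simp: space_prob_algebra)
  have Qs: "sets (Q D y) = sets Y2" "prob_space (Q D y)" if "y \<in> space Y1" for D y
    using M2s[OF that] unfolding Q_def by (auto simp: space_prob_algebra)
  define \<psi> where "\<psi> \<phi> D y = (\<integral>z. \<phi> (y, z) \<partial>Q D y)" for \<phi> :: "'a \<times> 'b \<Rightarrow> real" and D y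
  have Jint: "(\<integral>x. \<phi> x \<partial>J D) = (\<integral>y. \<psi> \<phi> D y \<partial>P D)"
    if "tst (J D0) \<phi>" for \<phi> D D0
  proof -
    have "\<phi> \<in> borel_measurable (Y1 \<Otimes>\<^sub>M Y2)" "\<And>x. x \<in> space (Y1 \<Otimes>\<^sub>M Y2) \<Longrightarrow> \<bar>\<phi> x\<bar> \<le> 1"
      using that Jsets[of D0] sets_eq_imp_space_eq[OF Jsets(1)[of D0]] unfolding tst_def
      by (auto simp: cong: measurable_cong_sets)
    from bind_facts(5)[OF M1s Qm this] show ?thesis unfolding Jeq P_def \<psi>_def .
  qed
  have tJ: "\<phi> \<in> borel_measurable (Y1 \<Otimes>\<^sub>M Y2) \<and> (\<forall>x\<in>space (Y1 \<Otimes>\<^sub>M Y2). 0 \<le> \<phi> x \<and> \<phi> x \<le> 1)"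
    if "tst (J D0) \<phi>" for \<phi> D0
    using that Jsets[of D0] sets_eq_imp_space_eq[OF Jsets(1)[of D0]] unfolding tst_def
    by (auto simp: cong: measurable_cong_sets)
  have tsec: "tst (Q D y) (\<lambda>z. \<phi> (y, z))" if "tst (J D0) \<phi>" "y \<in> space Y1" for \<phi> D0 D y
    using sec_tst[OF that(2) Qs(1)[OF that(2)]] tJ[OF that(1)] by blast
  have tpsi: "tst (P D') (\<psi> \<phi> D)" if "tst (J D0) \<phi>" for \<phi> D0 D D'
    unfolding tst_def
  proof
    have "(\<lambda>y. \<integral>z. \<phi> (y, z) \<partial>Q D y) \<in> borel_measurable Y1"
      using bind_facts(4)[OF M1s Qm] tJ[OF that] by blast
    then show "\<psi> \<phi> D \<in> borel_measurable (P D')"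
      unfolding \<psi>_def using Ps by (simp cong: measurable_cong_sets)
    show "\<forall>x\<in>space (P D'). 0 \<le> \<psi> \<phi> D x \<and> \<psi> \<phi> D x \<le> 1"
      using tst_int(2,3)[OF Qs(2) tsec[OF that]] sets_eq_imp_space_eq[OF Ps(1)] unfolding \<psi>_def
      by auto
  qed
  show ?thesis
    unfolding f_dp_def J_def[symmetric]
  proof (intro conjI allI impI ballI)
    fix D show "J D \<in> space (prob_algebra (Y1 \<Otimes>\<^sub>M Y2))" by (rule Js)
  next
    fix D D' :: "'r dataset" and \<alpha> :: real
    assume nb: "neighbors D D'" and a: "\<alpha> \<in> {0..1}"
    interpret tp: tpair "J D" "J D'" by (rule tpair.intro) (use Jsets in auto)
    obtain x where eqs: "\<And>S. x \<notin> S \<Longrightarrow> restrict_ds D S = restrict_ds D' S"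
      and nbs: "\<And>S. x \<in> S \<Longrightarrow> neighbors (restrict_ds D S) (restrict_ds D' S)"
      using restrict_nb[OF nb] by blast
    show "lce f1 f2 \<alpha> \<le> tradeoff (J D) (J D') \<alpha>"
    proof (rule tp.T_ge)
      show "0 \<le> \<alpha>" using a by auto
      fix \<phi> assume t: "tst (J D) \<phi>" and le: "(\<integral>x. \<phi> x \<partial>J D) \<le> \<alpha>"
      have iJ: "0 \<le> (\<integral>x. \<phi> x \<partial>J D)" using tst_int(2)[OF Jsets(2) t] .
      consider "x \<notin> S1" "x \<notin> S2" | "x \<in> S1" "x \<notin> S2" | "x \<notin> S1" "x \<in> S2" using disj by blast
      then show "lce f1 f2 \<alpha> \<le> 1 - (\<integral>x. \<phi> x \<partial>J D')"
      proof cases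
        case 1
        then have "J D = J D'" unfolding Jeq P_def Q_def using eqs by simp
        then show ?thesis using lce_le(1)[OF tf1 tf2 a] tf_props(4)[OF tf1 a] le by simp
      next
        case 2
        then have Qeq: "Q D = Q D'" unfolding Q_def using eqs[of S2] by simp
        have "lce f1 f2 \<alpha> \<le> f1 \<alpha>" by (rule lce_le(1)[OF tf1 tf2 a])
        also have "\<dots> \<le> tradeoff (P D) (P D') \<alpha>" unfolding P_def by (rule M1dp[OF nbs[OF 2(1)] a])
        also have "\<dots> \<le> 1 - (\<integral>y. \<psi> \<phi> D y \<partial>P D')"
        proof (rule tpair.T_le)
          show "tpair (P D) (P D')" by (rule tpair.intro) (use Ps in auto)
          show "tst (P D) (\<psi> \<phi> D)" by (rule tpsi[OF t])
          show "(\<integral>y. \<psi> \<phi> D y \<partial>P D) \<le> \<alpha>" using le Jint[OF t, of D] by simp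
        qed
        also have "(\<integral>y. \<psi> \<phi> D y \<partial>P D') = (\<integral>x. \<phi> x \<partial>J D')"
          using Jint[OF t, of D'] unfolding \<psi>_def Qeq by simp
        finally show ?thesis .
      next
        case 3
        then have Peq: "P D = P D'" unfolding P_def using eqs by simp
        have b: "f2 (\<psi> \<phi> D y) \<le> 1 - \<psi> \<phi> D' y" if y: "y \<in> space Y1" for y
        proof -
          have r: "\<psi> \<phi> D y \<in> {0..1}"
            using tst_int(2,3)[OF Qs(2)[OF y] tsec[OF t y]] unfolding \<psi>_def by auto
          have tq: "tpair (Q D y) (Q D' y)" by (rule tpair.intro) (use Qs[OF y] in auto)
          have "f2 (\<psi> \<phi> D y) \<le> tradeoff (Q D y) (Q D' y) (\<psi> \<phi> D y)"
            unfolding Q_def by (rule M2dp[OF y nbs[OF 3(2)] r])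
          moreover have "tradeoff (Q D y) (Q D' y) (\<psi> \<phi> D y) \<le> 1 - \<psi> \<phi> D' y"
            using tpair.T_le[OF tq tsec[OF t y], of "\<psi> \<phi> D y"] by (simp add: \<psi>_def)
          ultimately show ?thesis by linarith
        qed
        have "lce f1 f2 \<alpha> \<le> f2 \<alpha>" by (rule lce_le(2)[OF tf1 tf2 a]) 
        also have "\<dots> \<le> f2 (\<integral>y. \<psi> \<phi> D y \<partial>P D)"
          using tf_props(3)[OF tf2] iJ le a Jint[OF t, of D] by auto
        also have "\<dots> \<le> (\<integral>y. 1 - \<psi> \<phi> D' y \<partial>P D)"
        proof (rule jensen01[OF Ps(2) tpsi[OF t]])
          show "integrable (P D) (\<lambda>y. 1 - \<psi> \<phi> D' y)"
            using tst_int(1)[OF Ps(2) tpsi[OF t, of D D']]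
            by (intro Bochner_Integration.integrable_diff finite_measure.integrable_const[OF prob_space.finite_measure[OF Ps(2)]])
          show "convex_on {0..1} f2" by (rule tf_props(1)[OF tf2])
          fix y assume "y \<in> space (P D)"
          then show "f2 (\<psi> \<phi> D y) \<le> 1 - \<psi> \<phi> D' y"
            using b sets_eq_imp_space_eq[OF Ps(1)] by auto
        qed
        also have "\<dots> = 1 - (\<integral>y. \<psi> \<phi> D' y \<partial>P D)"
          by (subst Bochner_Integration.integral_diff[OF finite_measure.integrable_const[OF prob_space.finite_measure[OF Ps(2)]] tst_int(1)[OF Ps(2) tpsi[OF t, of D D']]])
             (simp add: prob_space.prob_space[OF Ps(2)])
        also have "(\<integral>y. \<psi> \<phi> D' y \<partial>P D) = (\<integral>x. \<phi> x \<partial>J D')"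
          using Jint[OF t, of D'] unfolding Peq by simp
        finally show ?thesis .
      qed
    qed
  qed
qed

end
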